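(* For every triple $(r,s,t)$ of nonnegative integers with $r+s+t=d$ and $r\ge s\ge t$, there exists a nonzero vector $\mathbf v\in E^*_{[s,t]}V$ with $L_1\mathbf v=L_2\mathbf v=\mathbf 0$. Conversely, if $\mathbf v\in E^*_{[s,t]}V$ is nonzero with $L_1\mathbf v=L_2\mathbf v=\mathbf 0$, then $r=d-s-t\ge s\ge t$.
   Context: Let $d\ge1$, $\mathbb F_3=\{0,1,2\}$, $X=\mathbb F_3^d$, $V=\mathbb C^X$ with standard basis $\{\hat y:y\in X\}$. $E^*_{[s,t]}$ is the diagonal projection onto the span of those $\hat y$ with $y$ having exactly $s$ coordinates equal to $1$ and $t$ equal to $2$. Define linear operators on $V$: $L_1\hat y$ is the sum of $\hat z$ over all $z$ obtained from $y$ by changing exactly one coordinate equal to $1$ into $0$ (empty sum $=0$), and $L_2$ similarly changes one coordinate $2\mapsto1$. *)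

theory Defs
  imports Complex_Main
begin

text \<open>Elements of F_3 are represented by the naturals 0,1,2; points of X = F_3^d by
  lists of length d with entries in {0,1,2}.  Vectors of V = C^X are functions
  from lists to complex numbers vanishing outside X; the basis vector of y is the
  indicator of y.\<close>

definition X :: "nat \<Rightarrow> nat list set" where
  "X d = {y. length y = d \<and> set y \<subseteq> {0,1,2}}"

definition cnt :: "nat \<Rightarrow> nat list \<Rightarrow> nat" where
  "cnt a y = length (filter (\<lambda>c. c = a) y)"

definition in_Estar :: "nat \<Rightarrow> nat \<Rightarrow> nat \<Rightarrow> (nat list \<Rightarrow> complex) \<Rightarrow> bool" where
  "in_Estar d s t v \<longleftrightarrow> (\<forall>y. v y \<noteq> 0 \<longrightarrow> y \<in> X d \<and> cnt 1 y = s \<and> cnt 2 y = t)"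

definition change_one :: "nat \<Rightarrow> nat \<Rightarrow> nat list \<Rightarrow> nat list set" where
  "change_one a b y = {y[i := b] | i. i < length y \<and> y ! i = a}"

text \<open>Linear extension of  y-hat \<mapsto> sum of z-hat over z in change_one a b y.\<close>
definition Lop :: "nat \<Rightarrow> nat \<Rightarrow> nat \<Rightarrow> (nat list \<Rightarrow> complex) \<Rightarrow> (nat list \<Rightarrow> complex)" where
  "Lop d a b v = (\<lambda>z. \<Sum>y\<in>X d. if z \<in> change_one a b y then v y else 0)"

definition L1 :: "nat \<Rightarrow> (nat list \<Rightarrow> complex) \<Rightarrow> (nat list \<Rightarrow> complex)" where
  "L1 d = Lop d 1 0"

definition L2 :: "nat \<Rightarrow> (nat list \<Rightarrow> complex) \<Rightarrow> (nat list \<Rightarrow> complex)" where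
  "L2 d = Lop d 2 1"

end

theory Submission
  imports Defs
begin

lemma change_one_Nil[simp]: "change_one a b [] = {}"
  by (auto simp: change_one_def)

thm_deps change_one_Nil

lemma change_one_Cons: "change_one a b (c#u) = (if c = a then {b#u} else {}) \<union> Cons c ` change_one a b u"
proof (rule set_eqI)
  fix z show "z \<in> change_one a b (c#u) \<longleftrightarrow> z \<in> (if c = a then {b#u} else {}) \<union> Cons c ` change_one a b u"
  proof
    assume "z \<in> change_one a b (c#u)"
    then obtain i where i: "i < Suc (length u)" "(c#u)!i = a" "z = (c#u)[i:=b]" by (auto simp: change_one_def)
    show "z \<in> (if c = a then {b#u} else {}) \<union> Cons c ` change_one a b u"
    proof (cases i)
      case 0 then show ?thesis using i by auto
    next
      case (Suc j) then show ?thesis using i by (auto simp: change_one_def)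
    qed
  next
    assume "z \<in> (if c = a then {b#u} else {}) \<union> Cons c ` change_one a b u"
    then show "z \<in> change_one a b (c#u)"
    proof
      assume "z \<in> (if c = a then {b#u} else {})"
      then show ?thesis unfolding change_one_def by (cases "c = a") (auto intro!: exI[of _ 0])
    next
      assume "z \<in> Cons c ` change_one a b u"
      then obtain j where "j < length u" "u!j = a" "z = c # u[j:=b]" by (auto simp: change_one_def)
      then show ?thesis unfolding change_one_def by (auto intro!: exI[of _ "Suc j"])
    qed
  qed
qed

thm_deps change_one_Cons

lemma change_one_length: "z \<in> change_one a b y \<Longrightarrow> length z = length y"
  by (auto simp: change_one_def)

thm_deps change_one_length

lemma finite_change_one[simp]: "finite (change_one a b y)"
  by (induction y) (auto simp: change_one_Cons)

thm_deps finite_change_one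

lemma mem_change_one_Cons: "e#w \<in> change_one a b (c#u) \<longleftrightarrow> (c = a \<and> e = b \<and> w = u) \<or> (e = c \<and> w \<in> change_one a b u)"
  by (auto simp: change_one_Cons)

thm_deps mem_change_one_Cons

lemma Nil_notin_change_one[simp]: "[] \<notin> change_one a b y"
  by (cases y) (auto simp: change_one_Cons)

thm_deps Nil_notin_change_one

lemma change_one_swap: "x \<in> change_one a b y \<longleftrightarrow> y \<in> change_one b a x"
proof (induction y arbitrary: x)
  case Nil then show ?case by (cases x) (auto simp: change_one_Cons)
next
  case (Cons c u) then show ?case by (cases x) (auto simp: mem_change_one_Cons)
qed

thm_deps change_one_swap

lemma X_0: "X 0 = {[]}" by (auto simp: X_def)
thm_deps X_0

lemma Nil_X[simp]: "[] \<in> X n \<longleftrightarrow> n = 0" by (auto simp: X_def)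
thm_deps Nil_X

lemma Cons_X[simp]: "c#u \<in> X n \<longleftrightarrow> (\<exists>m. n = Suc m \<and> c \<in> {0,1,2} \<and> u \<in> X m)"
  by (cases n) (auto simp: X_def)
thm_deps Cons_X

lemma Cons_X_Suc: "c#u \<in> X (Suc m) \<longleftrightarrow> c \<in> {0,1,2} \<and> u \<in> X m" by simp

thm_deps Cons_X_Suc

lemma finite_X[simp]: "finite (X d)"
proof -
  have "X d = {xs. set xs \<subseteq> {0,1,2} \<and> length xs = d}" by (auto simp: X_def)
  then show ?thesis by (simp add: finite_lists_length_eq)
qed

thm_deps finite_X

lemma X_Suc: "X (Suc n) = (\<lambda>(c,u). c#u) ` ({0,1,2} \<times> X n)"
proof (rule set_eqI)
  fix y show "y \<in> X (Suc n) \<longleftrightarrow> y \<in> (\<lambda>(c,u). c#u) ` ({0,1,2} \<times> X n)"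
    by (cases y) auto
qed

thm_deps X_Suc

lemma sum_X_Suc: "(\<Sum>y\<in>X (Suc n). f y) = (\<Sum>c\<in>{0,1,2::nat}. \<Sum>u\<in>X n. f (c#u))"
proof -
  have inj: "inj_on (\<lambda>(c,u). c#u) ({0,1,2::nat} \<times> X n)" by (auto simp: inj_on_def)
  have "(\<Sum>y\<in>X (Suc n). f y) = (\<Sum>p\<in>{0,1,2::nat} \<times> X n. f (fst p # snd p))"
    unfolding X_Suc by (subst sum.reindex[OF inj]) (auto intro!: sum.cong)
  also have "\<dots> = (\<Sum>(c,u)\<in>{0,1,2::nat} \<times> X n. f (c#u))"
    by (simp add: split_def)
  also have "\<dots> = (\<Sum>c\<in>{0,1,2::nat}. \<Sum>u\<in>X n. f (c#u))"
    by (rule sum.cartesian_product[symmetric])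
  finally show ?thesis .
qed

thm_deps sum_X_Suc

lemma change_one_X: "z \<in> change_one a b y \<Longrightarrow> y \<in> X d \<Longrightarrow> b \<in> {0,1,2} \<Longrightarrow> z \<in> X d"
  unfolding change_one_def X_def using set_update_subset_insert by fastforce

thm_deps change_one_X

lemma cnt_Cons[simp]: "cnt a (c#u) = (if c = a then 1 else 0) + cnt a u"
  by (simp add: cnt_def)
thm_deps cnt_Cons

lemma cnt_Nil[simp]: "cnt a [] = 0" by (simp add: cnt_def)
thm_deps cnt_Nil

lemma cnt_append[simp]: "cnt a (x@y) = cnt a x + cnt a y" by (simp add: cnt_def)

thm_deps cnt_append

lemma cnt_sum: "set y \<subseteq> {0,1,2} \<Longrightarrow> cnt 0 y + cnt 1 y + cnt 2 y = length y"
  by (induction y) auto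

thm_deps cnt_sum

lemma Lop_outside: "z \<notin> X d \<Longrightarrow> b \<in> {0,1,2} \<Longrightarrow> Lop d a b w z = 0"
  unfolding Lop_def by (rule sum.neutral) (auto dest: change_one_X)

thm_deps Lop_outside

lemma sum_if_eq: "finite S \<Longrightarrow> (\<Sum>u\<in>S. if P \<and> x = u then g u else 0) = (if P \<and> x \<in> S then g x else (0::'b::comm_monoid_add))"
  by (cases P) (simp_all add: sum.delta)

thm_deps sum_if_eq

lemma Lop_Cons:
  assumes "a \<in> {0,1,2}" "a \<noteq> b"
  shows "Lop (Suc n) a b w (e#x) = (if e = b \<and> x \<in> X n then w (a#x) else 0)
           + (if e \<in> {0,1,2} then Lop n a b (\<lambda>u. w (e#u)) x else 0)"
proof -
  have "Lop (Suc n) a b w (e#x) = (\<Sum>c\<in>{0,1,2::nat}. \<Sum>u\<in>X n.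
      (if c = a \<and> e = b \<and> x = u then w (c#u) else 0) + (if e = c \<and> x \<in> change_one a b u then w (c#u) else 0))"
    unfolding Lop_def sum_X_Suc mem_change_one_Cons using assms(2)
    by (intro sum.cong refl) auto
  also have "\<dots> = (\<Sum>c\<in>{0,1,2::nat}. (if c = a \<and> e = b \<and> x \<in> X n then w (c#x) else 0))
     + (\<Sum>c\<in>{0,1,2::nat}. if e = c then (\<Sum>u\<in>X n. if x \<in> change_one a b u then w (c#u) else 0) else 0)"
    unfolding sum.distrib
  proof (intro arg_cong2[where f="(+)"] sum.cong refl)
    fix c assume "c \<in> {0,1,2::nat}"
    show "(\<Sum>u\<in>X n. if c = a \<and> e = b \<and> x = u then w (c#u) else 0) = (if c = a \<and> e = b \<and> x \<in> X n then w (c#x) else 0)"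
      using sum_if_eq[of "X n" "c = a \<and> e = b" x "\<lambda>u. w (c#u)"] by simp
    show "(\<Sum>u\<in>X n. if e = c \<and> x \<in> change_one a b u then w (c#u) else 0) = (if e = c then (\<Sum>u\<in>X n. if x \<in> change_one a b u then w (c#u) else 0) else 0)"
      by simp
  qed
  also have "\<dots> = (if e = b \<and> x \<in> X n then w (a#x) else 0)
           + (if e \<in> {0,1,2} then Lop n a b (\<lambda>u. w (e#u)) x else 0)"
    using assms(1) unfolding Lop_def by (auto simp: sum.delta)
  finally show ?thesis .
qed

thm_deps Lop_Cons

lemma X_take_drop: "y \<in> X (k+n) \<longleftrightarrow> take k y \<in> X k \<and> drop k y \<in> X n"
proof
  assume a: "y \<in> X (k+n)"
  then have l: "length y = k + n" and s: "set y \<subseteq> {0,1,2}" by (auto simp: X_def)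
  have "length (take k y) = k" using l by simp
  moreover have "length (drop k y) = n" using l by simp
  moreover have "set (take k y) \<subseteq> {0,1,2}" by (rule order_trans[OF set_take_subset s])
  moreover have "set (drop k y) \<subseteq> {0,1,2}" by (rule order_trans[OF set_drop_subset s])
  ultimately show "take k y \<in> X k \<and> drop k y \<in> X n" unfolding X_def mem_Collect_eq by blast
next
  assume a: "take k y \<in> X k \<and> drop k y \<in> X n"
  have yy: "y = take k y @ drop k y" by simp
  have "length y = length (take k y) + length (drop k y)" by (subst yy) (rule length_append)
  then have "length y = k + n" using a unfolding X_def mem_Collect_eq by linarith
  moreover have "set y \<subseteq> {0,1,2}" using a yy unfolding X_def
    by (metis (no_types, lifting) Un_subset_iff mem_Collect_eq set_append)
  ultimately show "y \<in> X (k+n)" unfolding X_def mem_Collect_eq by blast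
qed

thm_deps X_take_drop

lemma Lop_scale: "Lop n a b (\<lambda>y. c * v y) z = c * Lop n a b v z"
  unfolding Lop_def sum_distrib_left by (intro sum.cong) auto

thm_deps Lop_scale

lemma Lop_0: "Lop 0 a b p z = 0"
  unfolding Lop_def X_0 by simp

definition tens :: "nat \<Rightarrow> (nat list \<Rightarrow> complex) \<Rightarrow> (nat list \<Rightarrow> complex) \<Rightarrow> nat list \<Rightarrow> complex" where
  "tens k p v = (\<lambda>y. p (take k y) * v (drop k y))"

thm_deps Lop_0

lemma Lop_tens:
  assumes ab: "a \<in> {0,1,2}" "b \<in> {0,1,2}" "a \<noteq> b"
    and sp: "\<forall>y. p y \<noteq> 0 \<longrightarrow> y \<in> X k" and sv: "\<forall>y. v y \<noteq> 0 \<longrightarrow> y \<in> X n"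
  shows "Lop (k+n) a b (tens k p v) y = Lop k a b p (take k y) * v (drop k y) + p (take k y) * Lop n a b v (drop k y)"
  using sp
proof (induction k arbitrary: p y)
  case 0
  have "tens 0 p v = (\<lambda>y. p [] * v y)" by (simp add: tens_def)
  then show ?case using ab by (simp add: Lop_scale Lop_0)
next
  case (Suc k)
  show ?case
  proof (cases "y \<in> X (Suc k + n)")
    case False
    then have "Lop (Suc k + n) a b (tens (Suc k) p v) y = 0" using ab by (simp add: Lop_outside)
    moreover have "Lop (Suc k) a b p (take (Suc k) y) * v (drop (Suc k) y) + p (take (Suc k) y) * Lop n a b v (drop (Suc k) y) = 0"
    proof (cases "take (Suc k) y \<in> X (Suc k)")
      case True
      then have "drop (Suc k) y \<notin> X n" using False X_take_drop by blast
      then have "v (drop (Suc k) y) = 0" "Lop n a b v (drop (Suc k) y) = 0"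
        using sv ab Lop_outside by auto
      then show ?thesis by simp
    next
      case False
      then have "p (take (Suc k) y) = 0" "Lop (Suc k) a b p (take (Suc k) y) = 0"
        using Suc.prems ab Lop_outside by auto
      then show ?thesis by simp
    qed
    ultimately show ?thesis by simp
  next
    case True
    then obtain e x where y: "y = e#x" and e: "e \<in> {0,1,2}" and x: "x \<in> X (k+n)"
      by (cases y) auto
    have tx: "take k x \<in> X k" using x X_take_drop by blast
    have sp': "\<forall>y. p (e#y) \<noteq> 0 \<longrightarrow> y \<in> X k" using Suc.prems by auto
    have te: "(\<lambda>u. tens (Suc k) p v (e#u)) = tens k (\<lambda>u. p (e#u)) v" by (simp add: tens_def)
    have "Lop (Suc k + n) a b (tens (Suc k) p v) y = Lop (Suc (k+n)) a b (tens (Suc k) p v) (e#x)"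
      using y by simp
    also have "\<dots> = (if e = b \<and> x \<in> X (k+n) then tens (Suc k) p v (a#x) else 0)
        + (if e \<in> {0,1,2} then Lop (k+n) a b (\<lambda>u. tens (Suc k) p v (e#u)) x else 0)"
      by (rule Lop_Cons[OF ab(1) ab(3)])
    also have "\<dots> = (if e = b \<and> x \<in> X (k+n) then tens (Suc k) p v (a#x) else 0) + Lop (k+n) a b (tens k (\<lambda>u. p (e#u)) v) x"
      using e unfolding te by simp
    also have "\<dots> = (if e = b then p (a # take k x) * v (drop k x) else 0)
        + (Lop k a b (\<lambda>u. p (e#u)) (take k x) * v (drop k x) + p (e # take k x) * Lop n a b v (drop k x))"
      unfolding Suc.IH[OF sp', of x] using x by (simp add: tens_def)
    also have "\<dots> = Lop (Suc k) a b p (take (Suc k) y) * v (drop (Suc k) y) + p (take (Suc k) y) * Lop n a b v (drop (Suc k) y)"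
      unfolding y take_Suc_Cons drop_Suc_Cons Lop_Cons[OF ab(1) ab(3)] using e tx by (simp add: distrib_right)
    finally show ?thesis .
  qed
qed

thm_deps Lop_tens

lemma card_inter_Cons:
  assumes "a \<noteq> b"
  shows "card (change_one a b (c#u) \<inter> change_one a b (c'#u')) =
    (if c = c' then (if c = a \<and> u = u' then 1 else 0) + card (change_one a b u \<inter> change_one a b u')
     else (if c = a \<and> c' = b \<and> u \<in> change_one a b u' then 1 else 0) + (if c' = a \<and> c = b \<and> u' \<in> change_one a b u then 1 else 0))"
proof (cases "c = c'")
  case True
  have eq: "change_one a b (c#u) \<inter> change_one a b (c'#u') =
     (if c = a \<and> u = u' then {b#u} else {}) \<union> Cons c ` (change_one a b u \<inter> change_one a b u')"
    using True assms by (auto simp: change_one_Cons)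
  have disj: "(if c = a \<and> u = u' then {b#u} else {}) \<inter> Cons c ` (change_one a b u \<inter> change_one a b u') = {}"
    using assms by auto
  have "card (Cons c ` (change_one a b u \<inter> change_one a b u')) = card (change_one a b u \<inter> change_one a b u')"
    by (rule card_image) (auto simp: inj_on_def)
  then show ?thesis unfolding eq using True card_Un_disjoint[OF _ _ disj] by simp
next
  case False
  have eq: "change_one a b (c#u) \<inter> change_one a b (c'#u') =
     (if c = a \<and> c' = b \<and> u \<in> change_one a b u' then {b#u} else {}) \<union>
     (if c' = a \<and> c = b \<and> u' \<in> change_one a b u then {b#u'} else {})"
    using False assms by (auto simp: change_one_Cons)
  show ?thesis unfolding eq using False assms by auto
qed

thm_deps card_inter_Cons

lemma delta_card:
  assumes "a \<noteq> b" "length u = length u'"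
  shows "int (card (change_one b a u \<inter> change_one b a u')) - int (card (change_one a b u \<inter> change_one a b u'))
     = (if u = u' then int (cnt b u) - int (cnt a u) else 0)"
  using assms(2)
proof (induction u arbitrary: u')
  case Nil then show ?case by simp
next
  case (Cons c u)
  then obtain c' w where u': "u' = c'#w" and lw: "length u = length w" by (cases u') auto
  have sw1: "u \<in> change_one b a w \<longleftrightarrow> w \<in> change_one a b u" by (rule change_one_swap[symmetric])
  have sw2: "w \<in> change_one b a u \<longleftrightarrow> u \<in> change_one a b w" by (rule change_one_swap[symmetric])
  have IH: "int (card (change_one b a u \<inter> change_one b a w)) - int (card (change_one a b u \<inter> change_one a b w))
     = (if u = w then int (cnt b u) - int (cnt a u) else 0)" using Cons.IH lw by blast
  show ?case unfolding u' card_inter_Cons[OF assms(1)] card_inter_Cons[OF assms(1)[symmetric]] sw1 sw2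
    using IH assms(1) by auto
qed

definition nsq :: "nat \<Rightarrow> (nat list \<Rightarrow> complex) \<Rightarrow> complex" where
  "nsq d w = (\<Sum>z\<in>X d. w z * cnj (w z))"

thm_deps delta_card

lemma nsq_Lop:
  assumes "b \<in> {0,1,2}"
  shows "nsq d (Lop d a b v) = (\<Sum>y\<in>X d. \<Sum>y'\<in>X d. v y * cnj (v y') * of_nat (card (change_one a b y \<inter> change_one a b y')))"
proof -
  let ?f = "\<lambda>z y. if z \<in> change_one a b y then v y else 0"
  have "nsq d (Lop d a b v) = (\<Sum>z\<in>X d. \<Sum>y\<in>X d. \<Sum>y'\<in>X d. ?f z y * cnj (?f z y'))"
    unfolding nsq_def Lop_def cnj_sum sum_product by simp
  also have "\<dots> = (\<Sum>y\<in>X d. \<Sum>y'\<in>X d. \<Sum>z\<in>X d. ?f z y * cnj (?f z y'))"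
    by (subst sum.swap) (subst (2) sum.swap, rule refl)
  also have "\<dots> = (\<Sum>y\<in>X d. \<Sum>y'\<in>X d. v y * cnj (v y') * of_nat (card (change_one a b y \<inter> change_one a b y')))"
  proof (intro sum.cong refl)
    fix y y' assume y: "y \<in> X d"
    have "(\<Sum>z\<in>X d. ?f z y * cnj (?f z y')) = (\<Sum>z\<in>X d. if z \<in> change_one a b y \<inter> change_one a b y' then v y * cnj (v y') else 0)"
      by (intro sum.cong refl) auto
    also have "\<dots> = (\<Sum>z\<in>{z\<in>X d. z \<in> change_one a b y \<inter> change_one a b y'}. v y * cnj (v y'))"
      by (rule sum.inter_filter[symmetric]) simp
    also have "{z\<in>X d. z \<in> change_one a b y \<inter> change_one a b y'} = change_one a b y \<inter> change_one a b y'"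
      using change_one_X[OF _ y assms] by blast
    finally show "(\<Sum>z\<in>X d. ?f z y * cnj (?f z y')) = v y * cnj (v y') * of_nat (card (change_one a b y \<inter> change_one a b y'))"
      by simp
  qed
  finally show ?thesis .
qed

thm_deps nsq_Lop

lemma weight_identity:
  assumes ab: "a \<in> {0,1,2}" "b \<in> {0,1,2}" "a \<noteq> b"
    and supp: "\<forall>y. v y \<noteq> 0 \<longrightarrow> y \<in> X d \<and> int (cnt b y) - int (cnt a y) = h"
  shows "nsq d (Lop d b a v) = nsq d (Lop d a b v) + of_int h * nsq d v"
proof -
  have "nsq d (Lop d b a v) - nsq d (Lop d a b v) =
    (\<Sum>y\<in>X d. \<Sum>y'\<in>X d. v y * cnj (v y') * (of_nat (card (change_one b a y \<inter> change_one b a y'))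
        - of_nat (card (change_one a b y \<inter> change_one a b y'))))"
    unfolding nsq_Lop[OF ab(1)] nsq_Lop[OF ab(2)] sum_subtractf[symmetric] right_diff_distrib by simp
  also have "\<dots> = (\<Sum>y\<in>X d. \<Sum>y'\<in>X d. if y = y' then v y * cnj (v y) * of_int (int (cnt b y) - int (cnt a y)) else 0)"
  proof (intro sum.cong refl)
    fix y y' assume "y \<in> X d" "y' \<in> X d"
    then have l: "length y = length y'" by (simp add: X_def)
    have "(of_nat (card (change_one b a y \<inter> change_one b a y')) - of_nat (card (change_one a b y \<inter> change_one a b y')) :: complex)
       = of_int (int (card (change_one b a y \<inter> change_one b a y')) - int (card (change_one a b y \<inter> change_one a b y')))"
      by simp
    also have "\<dots> = of_int (if y = y' then int (cnt b y) - int (cnt a y) else 0)"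
      unfolding delta_card[OF ab(3) l] ..
    finally show "v y * cnj (v y') * (of_nat (card (change_one b a y \<inter> change_one b a y')) - of_nat (card (change_one a b y \<inter> change_one a b y')))
       = (if y = y' then v y * cnj (v y) * of_int (int (cnt b y) - int (cnt a y)) else 0)"
      by simp
  qed
  also have "\<dots> = (\<Sum>y\<in>X d. v y * cnj (v y) * of_int (int (cnt b y) - int (cnt a y)))"
    by (simp add: sum.delta)
  also have "\<dots> = (\<Sum>y\<in>X d. of_int h * (v y * cnj (v y)))"
  proof (intro sum.cong refl)
    fix y show "v y * cnj (v y) * of_int (int (cnt b y) - int (cnt a y)) = of_int h * (v y * cnj (v y))"
      using supp by (cases "v y = 0") auto
  qed
  also have "\<dots> = of_int h * nsq d v" unfolding nsq_def by (simp add: sum_distrib_left)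
  finally show ?thesis by (simp add: algebra_simps)
qed

definition HW :: "nat \<Rightarrow> nat \<Rightarrow> nat \<Rightarrow> (nat list \<Rightarrow> complex) \<Rightarrow> bool" where
  "HW d s t v \<longleftrightarrow> in_Estar d s t v \<and> v \<noteq> (\<lambda>_. 0) \<and> Lop d 1 0 v = (\<lambda>_. 0) \<and> Lop d 2 1 v = (\<lambda>_. 0)"

thm_deps weight_identity

lemma in_Estar_supp: "in_Estar d s t v \<Longrightarrow> \<forall>y. v y \<noteq> 0 \<longrightarrow> y \<in> X d"
  by (auto simp: in_Estar_def)

thm_deps in_Estar_supp

lemma HW_tens:
  assumes p: "HW k s' t' p" and v: "HW n s t v"
  shows "HW (k+n) (s'+s) (t'+t) (tens k p v)"
proof -
  have sp: "\<forall>y. p y \<noteq> 0 \<longrightarrow> y \<in> X k" and sv: "\<forall>y. v y \<noteq> 0 \<longrightarrow> y \<in> X n"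
    using p v by (auto simp: HW_def in_Estar_def)
  have E: "in_Estar (k+n) (s'+s) (t'+t) (tens k p v)"
    unfolding in_Estar_def
  proof (intro allI impI)
    fix y assume "tens k p v y \<noteq> 0"
    then have a: "p (take k y) \<noteq> 0" "v (drop k y) \<noteq> 0" by (auto simp: tens_def)
    then have b: "take k y \<in> X k \<and> cnt 1 (take k y) = s' \<and> cnt 2 (take k y) = t'"
      "drop k y \<in> X n \<and> cnt 1 (drop k y) = s \<and> cnt 2 (drop k y) = t"
      using p v by (auto simp: HW_def in_Estar_def)
    have cc: "cnt c y = cnt c (take k y) + cnt c (drop k y)" for c
      by (metis append_take_drop_id cnt_append)
    have "y \<in> X (k+n)" using b by (intro X_take_drop[THEN iffD2]) simp
    then show "y \<in> X (k+n) \<and> cnt 1 y = s' + s \<and> cnt 2 y = t' + t"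
      using b cc[of 1] cc[of 2] by simp
  qed
  obtain y1 where y1: "p y1 \<noteq> 0" using p by (auto simp: HW_def)
  obtain y2 where y2: "v y2 \<noteq> 0" using v by (auto simp: HW_def)
  have "y1 \<in> X k" using sp y1 by blast
  then have "length y1 = k" unfolding X_def by simp
  then have "tens k p v (y1 @ y2) \<noteq> 0" using y1 y2 by (simp add: tens_def)
  then have NZ: "tens k p v \<noteq> (\<lambda>_. 0)" by auto
  have L: "Lop (k+n) a b (tens k p v) = (\<lambda>_. 0)" if "(a,b) \<in> {(1,0),(2,1)}" for a b
  proof
    fix y
    have ab: "a \<in> {0,1,2}" "b \<in> {0,1,2}" "a \<noteq> b" using that by auto
    have "Lop k a b p = (\<lambda>_. 0)" "Lop n a b v = (\<lambda>_. 0)" using that p v by (auto simp: HW_def)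
    then show "Lop (k+n) a b (tens k p v) y = 0" unfolding Lop_tens[OF ab sp sv] by simp
  qed
  show ?thesis unfolding HW_def using E NZ L[of 1 0] L[of 2 1] by simp
qed


thm_deps HW_tens

lemma X_SucE: assumes "z \<in> X (Suc n)" obtains e u where "z = e#u" "e \<in> {0,1,2}" "u \<in> X n"
  using assms by (cases z) auto

thm_deps X_SucE

lemma X_0E: assumes "z \<in> X 0" shows "z = []" using assms by (simp add: X_def)

definition p1 :: "nat list \<Rightarrow> complex" where "p1 y = (if y = [0] then 1 else 0)"
definition p2 :: "nat list \<Rightarrow> complex" where "p2 y = (if y = [0,1] then 1 else if y = [1,0] then -1 else 0)"
definition p3 :: "nat list \<Rightarrow> complex" where
  "p3 y = (if y = [0,1,2] \<or> y = [1,2,0] \<or> y = [2,0,1] then 1 else if y = [1,0,2] \<or> y = [0,2,1] \<or> y = [2,1,0] then -1 else 0)"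

thm_deps X_0E

lemma L_block:
  assumes ab: "(a,b) \<in> {(1::nat,0::nat),(2,1)}"
  shows "Lop 1 a b p1 z = 0" "Lop 2 a b p2 z = 0" "Lop 3 a b p3 z = 0"
proof -
  have ab': "a \<in> {0,1,2}" "b \<in> {0,1,2}" "a \<noteq> b" using ab by auto
  note LC = Lop_Cons[OF ab'(1) ab'(3)] Lop_0
  show "Lop 1 a b p1 z = 0"
  proof (cases "z \<in> X 1")
    case False then show ?thesis using Lop_outside ab'(2) by blast
  next
    case True
    then obtain e0 where z: "z = [e0]" "e0 \<in> {0,1,2}" by (auto elim!: X_SucE dest!: X_0E)
    show ?thesis using ab z(2) unfolding z(1) One_nat_def by (auto simp: LC p1_def)
  qed
  show "Lop 2 a b p2 z = 0"
  proof (cases "z \<in> X 2")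
    case False then show ?thesis using Lop_outside ab'(2) by blast
  next
    case True
    then obtain e0 e1 where z: "z = [e0,e1]" "e0 \<in> {0,1,2}" "e1 \<in> {0,1,2}"
      unfolding numeral_2_eq_2 by (auto elim!: X_SucE dest!: X_0E)
    show ?thesis using ab z(2,3) unfolding z(1) numeral_2_eq_2 by (auto simp: LC p2_def)
  qed
  show "Lop 3 a b p3 z = 0"
  proof (cases "z \<in> X 3")
    case False then show ?thesis using Lop_outside ab'(2) by blast
  next
    case True
    then obtain e0 e1 e2 where z: "z = [e0,e1,e2]" "e0 \<in> {0,1,2}" "e1 \<in> {0,1,2}" "e2 \<in> {0,1,2}"
      unfolding numeral_3_eq_3 by (auto elim!: X_SucE dest!: X_0E)
    have "Lop 3 a b p3 z = (if e0 = b then p3 [a,e1,e2] else 0) + (if e1 = b then p3 [e0,a,e2] else 0) + (if e2 = b then p3 [e0,e1,a] else 0)"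
      using z(2-4) unfolding z(1) numeral_3_eq_3 by (simp add: LC)
    also have "\<dots> = 0"
    proof -
      have "a = 1 \<and> b = 0 \<or> a = 2 \<and> b = 1" using ab by auto
      then show ?thesis using z(2-4) by (elim disjE conjE insertE emptyE; simp add: p3_def)
    qed
    finally show ?thesis .
  qed
qed

thm_deps L_block

lemma HW_p1: "HW 1 0 0 p1"
proof -
  have L: "Lop 1 a b p1 = (\<lambda>_. 0)" if "(a,b) \<in> {(1::nat,0::nat),(2,1)}" for a b
    by (rule ext) (rule L_block(1)[OF that])
  have N: "p1 [0] \<noteq> 0" by (simp add: p1_def)
  have S: "p1 y \<noteq> 0 \<Longrightarrow> y \<in> X 1 \<and> cnt 1 y = 0 \<and> cnt 2 y = 0" for y
  proof -
    assume "p1 y \<noteq> 0"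
    then have "y = [0]" by (cases "y = [0]") (simp_all add: p1_def)
    then show ?thesis by (simp add: X_def)
  qed
  have "in_Estar 1 0 0 p1" using S unfolding in_Estar_def by blast
  moreover have "p1 \<noteq> (\<lambda>_. 0)" using N by (metis)
  ultimately show ?thesis unfolding HW_def using L[of 1 0] L[of 2 1] by simp
qed

thm_deps HW_p1

lemma HW_p2: "HW 2 1 0 p2"
proof -
  have L: "Lop 2 a b p2 = (\<lambda>_. 0)" if "(a,b) \<in> {(1::nat,0::nat),(2,1)}" for a b
    by (rule ext) (rule L_block(2)[OF that])
  have N: "p2 [0,1] \<noteq> 0" by (simp add: p2_def)
  have S: "p2 y \<noteq> 0 \<Longrightarrow> y \<in> X 2 \<and> cnt 1 y = 1 \<and> cnt 2 y = 0" for y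
  proof -
    assume "p2 y \<noteq> 0"
    then have "y = [0,1] \<or> y = [1,0]" by (cases "y = [0,1] \<or> y = [1,0]") (simp_all add: p2_def)
    then show ?thesis by (elim disjE; simp add: X_def)
  qed
  have "in_Estar 2 1 0 p2" using S unfolding in_Estar_def by blast
  moreover have "p2 \<noteq> (\<lambda>_. 0)" using N by (metis)
  ultimately show ?thesis unfolding HW_def using L[of 1 0] L[of 2 1] by simp
qed

thm_deps HW_p2

lemma HW_p3: "HW 3 1 1 p3"
proof -
  have L: "Lop 3 a b p3 = (\<lambda>_. 0)" if "(a,b) \<in> {(1::nat,0::nat),(2,1)}" for a b
    by (rule ext) (rule L_block(3)[OF that])
  have N: "p3 [0,1,2] \<noteq> 0" by (simp add: p3_def)
  have S: "p3 y \<noteq> 0 \<Longrightarrow> y \<in> X 3 \<and> cnt 1 y = 1 \<and> cnt 2 y = 1" for y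
  proof -
    assume "p3 y \<noteq> 0"
    then have "y = [0,1,2] \<or> y = [1,2,0] \<or> y = [2,0,1] \<or> y = [1,0,2] \<or> y = [0,2,1] \<or> y = [2,1,0]" by (cases "y = [0,1,2] \<or> y = [1,2,0] \<or> y = [2,0,1] \<or> y = [1,0,2] \<or> y = [0,2,1] \<or> y = [2,1,0]") (simp_all add: p3_def)
    then show ?thesis by (elim disjE; simp add: X_def)
  qed
  have "in_Estar 3 1 1 p3" using S unfolding in_Estar_def by blast
  moreover have "p3 \<noteq> (\<lambda>_. 0)" using N by (metis)
  ultimately show ?thesis unfolding HW_def using L[of 1 0] L[of 2 1] by simp
qed

thm_deps HW_p3

lemma HW_base: "HW 0 0 0 (\<lambda>y. if y = [] then 1 else 0)"
  unfolding HW_def in_Estar_def by (auto simp: Lop_0 X_def fun_eq_iff)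

thm_deps HW_base

lemma HW_singles: "HW n s t v \<Longrightarrow> \<exists>v'. HW (m+n) s t v'"
proof (induction m)
  case 0 then show ?case by auto
next
  case (Suc m)
  then obtain w where "HW (m+n) s t w" by blast
  from HW_tens[OF HW_p1 this] show ?case by auto
qed

thm_deps HW_singles

lemma HW_pairs: "HW n s t v \<Longrightarrow> \<exists>v'. HW (2*m+n) (m+s) t v'"
proof (induction m)
  case 0 then show ?case by auto
next
  case (Suc m)
  then obtain w where "HW (2*m+n) (m+s) t w" by blast
  from HW_tens[OF HW_p2 this] show ?case by (auto simp: add.assoc)
qed

thm_deps HW_pairs

lemma HW_trips: "\<exists>v. HW (3*m) m m v"
proof (induction m)
  case 0 then show ?case using HW_base by auto
next
  case (Suc m)
  then obtain w where "HW (3*m) m m w" by blast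
  from HW_tens[OF HW_p3 this] show ?case by auto
qed

thm_deps HW_trips

lemma Re_nsq_nonneg: "0 \<le> Re (nsq d w)"
  unfolding nsq_def Re_sum by (intro sum_nonneg) (simp add: complex_mult_cnj)

thm_deps Re_nsq_nonneg

lemma Re_nsq_pos: assumes "y0 \<in> X d" "w y0 \<noteq> 0" shows "0 < Re (nsq d w)"
proof -
  have "0 < Re (w y0 * cnj (w y0))" using assms(2)
    by (simp add: complex_mult_cnj complex_eq_iff sum_power2_gt_zero_iff)
  also have "\<dots> \<le> (\<Sum>z\<in>X d. Re (w z * cnj (w z)))"
    by (rule member_le_sum) (auto simp: complex_mult_cnj assms(1))
  finally show ?thesis unfolding nsq_def Re_sum .
qed

thm_deps Re_nsq_pos

lemma hw_sign:
  assumes ab: "a \<in> {0,1,2}" "b \<in> {0,1,2}" "a \<noteq> b"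
    and supp: "\<forall>y. v y \<noteq> 0 \<longrightarrow> y \<in> X d \<and> int (cnt b y) - int (cnt a y) = h"
    and L: "Lop d a b v = (\<lambda>_. 0)" and y0: "v y0 \<noteq> 0"
  shows "0 \<le> h"
proof -
  have "nsq d (Lop d a b v) = 0" unfolding L nsq_def by simp
  then have e: "nsq d (Lop d b a v) = of_int h * nsq d v" using weight_identity[OF ab supp] by simp
  have "0 \<le> Re (nsq d (Lop d b a v))" by (rule Re_nsq_nonneg)
  also have "\<dots> = of_int h * Re (nsq d v)" unfolding e by simp
  finally have "0 \<le> real_of_int h * Re (nsq d v)" .
  moreover have "0 < Re (nsq d v)" using Re_nsq_pos y0 supp by blast
  ultimately show ?thesis by (simp add: zero_le_mult_iff)
qed

thm_deps hw_sign

theorem lemma4p4: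
  fixes d :: nat
  assumes "d \<ge> 1"
  shows "(\<forall>r s t. r + s + t = d \<and> r \<ge> s \<and> s \<ge> t \<longrightarrow>
            (\<exists>v. in_Estar d s t v \<and> v \<noteq> (\<lambda>_. 0) \<and> L1 d v = (\<lambda>_. 0) \<and> L2 d v = (\<lambda>_. 0)))
       \<and> (\<forall>s t v. in_Estar d s t v \<and> v \<noteq> (\<lambda>_. 0) \<and> L1 d v = (\<lambda>_. 0) \<and> L2 d v = (\<lambda>_. 0) \<longrightarrow>
            s + t \<le> d \<and> d - s - t \<ge> s \<and> s \<ge> t)"
proof (intro conjI allI impI)
  fix r s t assume a: "r + s + t = d \<and> r \<ge> s \<and> s \<ge> t"
  obtain v1 where "HW (3*t) t t v1" using HW_trips by blast
  then obtain v2 where "HW (2*(s-t) + 3*t) ((s-t) + t) t v2" using HW_pairs by blast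
  then obtain v3 where v3: "HW ((r-s) + (2*(s-t) + 3*t)) ((s-t) + t) t v3" using HW_singles by blast
  have "(r-s) + (2*(s-t) + 3*t) = d" "(s-t) + t = s" using a by auto
  then have "HW d s t v3" using v3 by simp
  then show "\<exists>v. in_Estar d s t v \<and> v \<noteq> (\<lambda>_. 0) \<and> L1 d v = (\<lambda>_. 0) \<and> L2 d v = (\<lambda>_. 0)"
    unfolding HW_def L1_def L2_def by blast
next
  fix s t v assume a: "in_Estar d s t v \<and> v \<noteq> (\<lambda>_. 0) \<and> L1 d v = (\<lambda>_. 0) \<and> L2 d v = (\<lambda>_. 0)"
  have E: "in_Estar d s t v" and NZ: "v \<noteq> (\<lambda>_. 0)" and L1: "Lop d 1 0 v = (\<lambda>_. 0)" and L2: "Lop d 2 1 v = (\<lambda>_. 0)"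
    using a unfolding L1_def L2_def by simp_all
  obtain y0 where y0: "v y0 \<noteq> 0" using NZ by (auto simp: fun_eq_iff)
  have sp: "y \<in> X d \<and> cnt 1 y = s \<and> cnt 2 y = t \<and> cnt 0 y + s + t = d" if "v y \<noteq> 0" for y
  proof -
    have h: "y \<in> X d" "cnt 1 y = s" "cnt 2 y = t" using E that unfolding in_Estar_def by blast+
    have "set y \<subseteq> {0,1,2}" "length y = d" using h(1) unfolding X_def by simp_all
    then have "cnt 0 y + cnt 1 y + cnt 2 y = d" using cnt_sum by simp
    then show ?thesis using h by simp
  qed
  have std: "s + t \<le> d" using sp[OF y0] by linarith
  have s1: "\<forall>y. v y \<noteq> 0 \<longrightarrow> y \<in> X d \<and> int (cnt 0 y) - int (cnt 1 y) = int (d - s - t) - int s"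
  proof (intro allI impI)
    fix y assume "v y \<noteq> 0"
    from sp[OF this] show "y \<in> X d \<and> int (cnt 0 y) - int (cnt 1 y) = int (d - s - t) - int s"
      by (intro conjI) (simp, linarith)
  qed
  have "0 \<le> int (d - s - t) - int s"
    by (rule hw_sign[OF _ _ _ s1 L1 y0]) simp_all
  then show "d - s - t \<ge> s" by simp
  have s2: "\<forall>y. v y \<noteq> 0 \<longrightarrow> y \<in> X d \<and> int (cnt 1 y) - int (cnt 2 y) = int s - int t"
  proof (intro allI impI)
    fix y assume "v y \<noteq> 0"
    from sp[OF this] show "y \<in> X d \<and> int (cnt 1 y) - int (cnt 2 y) = int s - int t" by simp
  qed
  have "0 \<le> int s - int t"
    by (rule hw_sign[OF _ _ _ s2 L2 y0]) simp_all
  then show "s \<ge> t" by simp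
  show "s + t \<le> d" by (rule std)
qed

thm_deps lemma4p4

end
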